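(* Let $T$ be a phylogenetic tree with leaf set $X$ and nonnegative branch lengths. For $A\subseteq X$ let $\delta_A$ denote the phylogenetic diversity of $A$, i.e. the sum of the branch lengths of the smallest subtree of $T$ connecting the leaves in $A$ (with $\delta_A=0$ if $|A|\le 1$). Then: \begin{enumerate} \item For all $A\subseteq X$, $\displaystyle \delta_A=\sum_{B\subseteq A}(-1)^{|B|}\delta_B$ (the sum including $B=\emptyset$ and $B=A$). \item For all $A\subseteq X$ of odd cardinality, $\displaystyle \delta_A=\sum_{\substack{B\subset A\\ |B|\text{ even}}}\frac{\mathbb{T}_{|A|-|B|}}{2^{|A|-|B|}}\,\delta_B$. \end{enumerate}
   Context: The tangent numbers $\mathbb{T}_k$ are defined by the power series $\tanh(x)=\sum_{k=0}^\infty \mathbb{T}_k\,\frac{x^k}{k!}$. A phylogenetic tree with leaf set $X$ is a tree whose leaves are bijectively labelled by $X$. *)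

theory Defs
  imports "HOL-Analysis.Analysis"
begin

definition reach :: "'v set set \<Rightarrow> 'v \<Rightarrow> 'v \<Rightarrow> bool" where
  "reach F = (\<lambda>u v. {u, v} \<in> F)\<^sup>*\<^sup>*"

definition is_tree :: "'v set \<Rightarrow> 'v set set \<Rightarrow> bool" where
  "is_tree V E \<longleftrightarrow> finite V \<and> V \<noteq> {} \<and>
     (\<forall>e\<in>E. \<exists>u v. e = {u, v} \<and> u \<noteq> v \<and> u \<in> V \<and> v \<in> V) \<and>
     (\<forall>u\<in>V. \<forall>v\<in>V. reach E u v) \<and>
     (\<forall>e\<in>E. \<forall>u v. e = {u, v} \<longrightarrow> \<not> reach (E - {e}) u v)"
  \<comment> \<open>finite, connected, and minimally connected (every edge is a bridge), i.e. acyclic\<close>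

definition leaves :: "'v set \<Rightarrow> 'v set set \<Rightarrow> 'v set" where
  "leaves V E = {v \<in> V. card {e \<in> E. v \<in> e} \<le> 1}"

text \<open>Edge set of the smallest subtree of T connecting the vertex set S: the intersection
  of all edge sets connecting every pair of vertices of S (empty when card S \<le> 1).\<close>

definition span_edges :: "'v set set \<Rightarrow> 'v set \<Rightarrow> 'v set set" where
  "span_edges E S = \<Inter>{F. F \<subseteq> E \<and> (\<forall>a\<in>S. \<forall>b\<in>S. reach F a b)}"

definition PD :: "'v set set \<Rightarrow> ('v set \<Rightarrow> real) \<Rightarrow> ('x \<Rightarrow> 'v) \<Rightarrow> 'x set \<Rightarrow> real" where
  "PD E w phi A = (\<Sum>e\<in>span_edges E (phi ` A). w e)"

text \<open>Tangent numbers: tanh x = sum_k T_k x^k / k!, so T_k is the k-th derivative of tanh at 0.\<close>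

definition tangent_number :: "nat \<Rightarrow> real" where
  "tangent_number k = (deriv ^^ k) (tanh :: real \<Rightarrow> real) 0"

end

theory Submission imports Defs "HOL-Computational_Algebra.Polynomial"
begin


definition dseq :: "(nat \<Rightarrow> real \<Rightarrow> real) \<Rightarrow> bool" where
  "dseq F \<longleftrightarrow> (\<forall>k x. (F k has_real_derivative F (Suc k) x) (at x))"

lemma dseqD: "dseq F \<Longrightarrow> (F k has_real_derivative F (Suc k) x) (at x)"
  by (simp add: dseq_def)

lemma dseq_deriv: "dseq F \<Longrightarrow> (deriv ^^ k) (F 0) = F k"
proof (induction k)
  case 0 then show ?case by simp
next
  case (Suc k)
  have "deriv (F k) = F (Suc k)"
    using dseqD[OF Suc.prems] by (intro ext DERIV_imp_deriv) auto
  then show ?case using Suc by simp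
qed

lemma dseq_unique: "dseq F \<Longrightarrow> dseq G \<Longrightarrow> F 0 = G 0 \<Longrightarrow> F k = G k"
  using dseq_deriv[of F k] dseq_deriv[of G k] by simp

lemma dseq_const: "dseq (\<lambda>k x. if k = 0 then c else 0)"
  unfolding dseq_def by (auto intro: derivative_eq_intros)

lemma dseq_cosh: "dseq (\<lambda>k x. if even k then cosh x else sinh x)"
  unfolding dseq_def by (auto intro!: derivative_eq_intros)

lemma dseq_sinh: "dseq (\<lambda>k x. if even k then sinh x else cosh x)"
  unfolding dseq_def by (auto intro!: derivative_eq_intros)

lemma dseq_add: "dseq F \<Longrightarrow> dseq G \<Longrightarrow> dseq (\<lambda>k x. F k x + G k x)"
  unfolding dseq_def by (auto intro!: derivative_eq_intros)

lemma dseq_cmult: "dseq F \<Longrightarrow> dseq (\<lambda>k x. c * F k x)"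
  unfolding dseq_def by (auto intro!: derivative_eq_intros)

lemma dseq_sum: "finite I \<Longrightarrow> (\<And>i. i \<in> I \<Longrightarrow> dseq (F i)) \<Longrightarrow> dseq (\<lambda>k x. \<Sum>i\<in>I. F i k x)"
  unfolding dseq_def by (auto intro!: DERIV_sum)

lemma dseq_shift: "dseq F \<Longrightarrow> dseq (\<lambda>k x. F k (x + y))"
  unfolding dseq_def
proof (intro allI)
  fix k x
  assume "\<forall>k x. (F k has_real_derivative F (Suc k) x) (at x)"
  then have h1: "(F k has_real_derivative F (Suc k) (x + y)) (at (x + y))" by blast
  have h2: "((\<lambda>x. x + y) has_real_derivative 1) (at x)"
    using DERIV_add[OF DERIV_ident DERIV_const[of y]] by simp
  show "((\<lambda>x. F k (x + y)) has_real_derivative F (Suc k) (x + y)) (at x)"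
    using DERIV_chain2[where f="F k" and g="\<lambda>x. x + y", OF h1 h2] by simp
qed

lemma dseq_scale: "dseq F \<Longrightarrow> dseq (\<lambda>k x. r ^ k * F k (r * x))"
  unfolding dseq_def
proof (intro allI)
  fix k x
  assume "\<forall>k x. (F k has_real_derivative F (Suc k) x) (at x)"
  then have h1: "(F k has_real_derivative F (Suc k) (r * x)) (at (r * x))" by blast
  have h2: "((\<lambda>x. r * x) has_real_derivative r) (at x)"
    using DERIV_cmult[OF DERIV_ident, of r] by simp
  have "((\<lambda>x. F k (r * x)) has_real_derivative F (Suc k) (r * x) * r) (at x)"
    using DERIV_chain2[where f="F k" and g="\<lambda>x. r * x", OF h1 h2] by simp
  from DERIV_cmult[OF this, of "r ^ k"]
  show "((\<lambda>x. r ^ k * F k (r * x)) has_real_derivative r ^ Suc k * F (Suc k) (r * x)) (at x)"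
    by (simp add: algebra_simps)
qed

lemma dseq_idx: "dseq F \<Longrightarrow> dseq (\<lambda>k. F (k + m))"
  unfolding dseq_def by auto

lemma ring_aux: "(c::real) * a * b + d * (c * e) = c * (a * b + e * d)"
  by (simp add: algebra_simps)

lemma dseq_mult:
  assumes F: "dseq F" and G: "dseq G"
  shows "dseq (\<lambda>k x. \<Sum>i\<le>k. of_nat (k choose i) * F i x * G (k - i) x)"
  unfolding dseq_def
proof (intro allI)
  fix k x
  have d: "((\<lambda>x. \<Sum>i\<le>k. of_nat (k choose i) * F i x * G (k - i) x) has_real_derivative
      (\<Sum>i\<le>k. of_nat (k choose i) * (F (Suc i) x * G (k - i) x + F i x * G (Suc (k - i)) x))) (at x)"
  proof (rule DERIV_sum)
    fix i
    have e: "of_nat (k choose i) * F (Suc i) x * G (k - i) x + of_nat (k choose i) * F i x * G (Suc (k - i)) x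
       = of_nat (k choose i) * (F (Suc i) x * G (k - i) x + F i x * G (Suc (k - i)) x)"
      by (simp add: distrib_left)
    show "((\<lambda>x. of_nat (k choose i) * F i x * G (k - i) x) has_real_derivative
         of_nat (k choose i) * (F (Suc i) x * G (k - i) x + F i x * G (Suc (k - i)) x)) (at x)"
      by (rule DERIV_cong[OF DERIV_mult[OF DERIV_cmult[OF dseqD[OF F, of i x]] dseqD[OF G, of "k - i" x]] ring_aux])
  qed
  have "(\<Sum>i\<le>k. of_nat (k choose i) * (F (Suc i) x * G (k - i) x + F i x * G (Suc (k - i)) x))
      = (\<Sum>i\<le>Suc k. of_nat (Suc k choose i) * F i x * G (Suc k - i) x)"
  proof -
    have s1: "(\<Sum>i\<le>Suc k. of_nat (Suc k choose i) * F i x * G (Suc k - i) x)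
       = (\<Sum>i\<le>Suc k. of_nat (k choose i) * F i x * G (Suc k - i) x)
       + (\<Sum>i\<le>Suc k. of_nat (if i = 0 then 0 else k choose (i - 1)) * F i x * G (Suc k - i) x)"
    proof -
      have "\<And>i. of_nat (Suc k choose i) * F i x * G (Suc k - i) x
          = of_nat (k choose i) * F i x * G (Suc k - i) x
          + of_nat (if i = 0 then 0 else k choose (i - 1)) * F i x * G (Suc k - i) x"
      proof -
        fix i
        have "(Suc k choose i) = (k choose i) + (if i = 0 then 0 else (k choose (i - 1)))"
          by (cases i) simp_all
        then show "of_nat (Suc k choose i) * F i x * G (Suc k - i) x
          = of_nat (k choose i) * F i x * G (Suc k - i) x
          + of_nat (if i = 0 then 0 else k choose (i - 1)) * F i x * G (Suc k - i) x"
          by (simp only: of_nat_add distrib_right)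
      qed
      then show ?thesis by (simp only: sum.distrib)
    qed
    have s2: "(\<Sum>i\<le>Suc k. of_nat (k choose i) * F i x * G (Suc k - i) x)
       = (\<Sum>i\<le>k. of_nat (k choose i) * F i x * G (Suc (k - i)) x)"
      by (simp add: Suc_diff_le)
    have s3: "(\<Sum>i\<le>Suc k. of_nat (if i = 0 then 0 else k choose (i - 1)) * F i x * G (Suc k - i) x)
       = (\<Sum>i\<le>k. of_nat (k choose i) * F (Suc i) x * G (k - i) x)"
      by (subst sum.atMost_Suc_shift) simp
    show ?thesis using s1 s2 s3 by (simp add: sum.distrib algebra_simps)
  qed
  then show "((\<lambda>x. \<Sum>i\<le>k. of_nat (k choose i) * F i x * G (k - i) x) has_real_derivative
      (\<Sum>i\<le>Suc k. of_nat (Suc k choose i) * F i x * G (Suc k - i) x)) (at x)"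
    using d by simp
qed



fun TP :: "nat \<Rightarrow> real poly" where
  "TP 0 = [:0, 1:]"
| "TP (Suc k) = pderiv (TP k) * [:1, 0, -1:]"

lemma dseq_tanh: "dseq (\<lambda>k x. poly (TP k) (tanh x))"
  unfolding dseq_def
proof (intro allI)
  fix k x
  have h1: "((\<lambda>t. poly (TP k) t) has_real_derivative poly (pderiv (TP k)) (tanh x)) (at (tanh x))"
    by (rule poly_DERIV)
  have h2: "(tanh has_real_derivative 1 - tanh x ^ 2) (at x)"
    using has_field_derivative_tanh[OF _ DERIV_ident, of x UNIV] by simp
  have "((\<lambda>x. poly (TP k) (tanh x)) has_real_derivative poly (pderiv (TP k)) (tanh x) * (1 - tanh x ^ 2)) (at x)"
    using DERIV_chain2[where f="\<lambda>t. poly (TP k) t" and g=tanh, OF h1 h2] .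
  moreover have "poly (TP (Suc k)) (tanh x) = poly (pderiv (TP k)) (tanh x) * (1 - tanh x ^ 2)"
    by (simp add: power2_eq_square algebra_simps)
  ultimately show "((\<lambda>x. poly (TP k) (tanh x)) has_real_derivative poly (TP (Suc k)) (tanh x)) (at x)"
    by simp
qed

lemma tangent_number_poly: "tangent_number k = poly (TP k) 0"
proof -
  have "(\<lambda>x. poly (TP 0) (tanh x)) = tanh" by (simp add: fun_eq_iff)
  then show ?thesis
    using dseq_deriv[OF dseq_tanh, of k] unfolding tangent_number_def by simp
qed

definition Tt :: "nat \<Rightarrow> real \<Rightarrow> real" where
  "Tt k x = (1/2) ^ k * poly (TP k) (tanh ((1/2) * x))"

lemma dseq_Tt: "dseq Tt"
  unfolding Tt_def[abs_def] by (rule dseq_scale[OF dseq_tanh])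

definition cc :: "nat \<Rightarrow> real" where "cc k = Tt k 0"

lemma cc_tangent: "cc k = tangent_number k / 2 ^ k"
  by (simp add: cc_def Tt_def tangent_number_poly power_one_over)

lemma Tt0: "Tt 0 x = tanh (x / 2)"
  by (simp add: Tt_def)

lemma tanh_identity: "tanh ((x + y) / 2) * (cosh x + cosh y) = sinh x + sinh (y::real)"
proof -
  define u where "u = (x + y) / 2"
  define v where "v = (x - y) / 2"
  have x: "x = u + v" and y: "y = u - v" by (simp_all add: u_def v_def field_simps)
  have "cosh x + cosh y = 2 * cosh u * cosh v"
    unfolding x y by (simp add: cosh_add cosh_diff)
  moreover have "sinh x + sinh y = 2 * sinh u * cosh v"
    unfolding x y by (simp add: sinh_add sinh_diff)
  moreover have "tanh u * cosh u = sinh u"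
    using cosh_real_pos[of u] by (simp add: tanh_def)
  ultimately show ?thesis unfolding u_def[symmetric]
    by (metis mult.assoc mult.commute)
qed

definition csq :: "nat \<Rightarrow> real \<Rightarrow> real" where "csq k x = (if even k then cosh x else sinh x)"

lemma stepA:
  assumes "a \<ge> 1"
  shows "(\<Sum>i\<le>a. of_nat (a choose i) * (if even i then 1 else 0) * Tt (a - i) y) + cosh y * Tt a y
         = (if odd a then 1 else 0)"
proof -
  define L where "L = (\<lambda>k x. (\<Sum>i\<le>k. of_nat (k choose i) * csq i x * Tt (k - i) (x + y)) + cosh y * Tt k (x + y))"
  define R where "R = (\<lambda>(k::nat) x. (if even k then sinh x else cosh x) + (if k = 0 then sinh y else 0))"
  have dL: "dseq L" unfolding L_def csq_def
    by (intro dseq_add dseq_cmult dseq_shift dseq_Tt dseq_mult[OF dseq_cosh])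
  have dR: "dseq R" unfolding R_def
    by (intro dseq_add dseq_sinh dseq_const)
  have "L 0 = R 0"
    unfolding L_def R_def by (auto simp: fun_eq_iff csq_def Tt0 tanh_identity[symmetric] algebra_simps)
  then have "L a 0 = R a 0" using dseq_unique[OF dL dR] by metis
  moreover have "L a 0 = (\<Sum>i\<le>a. of_nat (a choose i) * (if even i then 1 else 0) * Tt (a - i) y) + cosh y * Tt a y"
    unfolding L_def csq_def by (intro arg_cong2[where f="(+)"] sum.cong) auto
  ultimately show ?thesis using assms unfolding R_def by auto
qed

lemma stepB:
  assumes "a \<ge> 1" "b \<ge> 1"
  shows "(\<Sum>i\<le>a. of_nat (a choose i) * (if even i then 1 else 0) * cc (a + b - i))
       + (\<Sum>j\<le>b. of_nat (b choose j) * (if even j then 1 else 0) * cc (a + b - j)) = 0"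
proof -
  define M where "M = (\<lambda>k y. (\<Sum>i\<le>a. of_nat (a choose i) * (if even i then 1 else 0) * Tt (k + (a - i)) y)
      + (\<Sum>j\<le>k. of_nat (k choose j) * csq j y * Tt ((k - j) + a) y))"
  define C where "C = (\<lambda>(k::nat) (y::real). if k = 0 then (if odd a then 1 else 0::real) else 0)"
  have d2: "dseq (\<lambda>k y. \<Sum>j\<le>k. of_nat (k choose j) * csq j y * Tt ((k - j) + a) y)"
    using dseq_mult[OF dseq_cosh dseq_idx[OF dseq_Tt, of a]] unfolding csq_def .
  have dM: "dseq M" unfolding M_def
    by (intro dseq_add d2 dseq_sum dseq_cmult dseq_idx dseq_Tt finite_atMost)
  have dC: "dseq C" unfolding C_def by (rule dseq_const)
  have "M 0 = C 0"
    using stepA[OF assms(1)] unfolding M_def C_def by (auto simp: fun_eq_iff csq_def algebra_simps)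
  then have "M b 0 = C b 0" using dseq_unique[OF dM dC] by metis
  moreover have "M b 0 = (\<Sum>i\<le>a. of_nat (a choose i) * (if even i then 1 else 0) * cc (a + b - i))
       + (\<Sum>j\<le>b. of_nat (b choose j) * (if even j then 1 else 0) * cc (a + b - j))"
    unfolding M_def csq_def cc_def
    by (intro arg_cong2[where f="(+)"] sum.cong) (auto simp: add.commute)
  ultimately show ?thesis using assms unfolding C_def by auto
qed

lemma stepI1:
  assumes "a \<ge> 1"
  shows "(\<Sum>i\<le>a. of_nat (a choose i) * (if even i then 1 else 0) * cc (a - i)) + cc a = (if odd a then 1 else 0)"
  using stepA[OF assms, of 0] by (simp add: cc_def)



definition ecut :: "'x set \<Rightarrow> 'x set \<Rightarrow> bool" where
  "ecut Q B \<longleftrightarrow> (\<exists>a\<in>B. a \<in> Q) \<and> (\<exists>b\<in>B. b \<notin> Q)"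

lemma card_sum:
  fixes f :: "nat \<Rightarrow> real"
  assumes "finite A"
  shows "(\<Sum>B\<in>Pow A. f (card B)) = (\<Sum>k\<le>card A. of_nat (card A choose k) * f k)"
proof -
  have "(\<Sum>B\<in>Pow A. f (card B)) = (\<Sum>k\<le>card A. \<Sum>B\<in>{B. B \<in> Pow A \<and> card B = k}. f (card B))"
    by (rule sum.group[symmetric]) (use assms in \<open>auto intro: card_mono\<close>)
  also have "\<dots> = (\<Sum>k\<le>card A. of_nat (card A choose k) * f k)"
  proof (rule sum.cong[OF refl])
    fix k
    have e: "{B. B \<in> Pow A \<and> card B = k} = {B. B \<subseteq> A \<and> card B = k}" by auto
    have "(\<Sum>B\<in>{B. B \<in> Pow A \<and> card B = k}. f (card B)) = (\<Sum>B\<in>{B. B \<subseteq> A \<and> card B = k}. f k)"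
      unfolding e by (rule sum.cong) auto
    also have "\<dots> = of_nat (card A choose k) * f k"
      using n_subsets[OF assms, of k] by simp
    finally show "(\<Sum>B\<in>{B. B \<in> Pow A \<and> card B = k}. f (card B)) = of_nat (card A choose k) * f k" .
  qed
  finally show ?thesis .
qed

lemma sum_sub:
  fixes h :: "nat \<Rightarrow> real"
  assumes "finite A" "A' \<subseteq> A"
  shows "(\<Sum>B\<in>Pow A. h (card B) * of_bool (B \<subseteq> A')) = (\<Sum>k\<le>card A'. of_nat (card A' choose k) * h k)"
proof -
  have fA': "finite A'" using assms finite_subset by blast
  have "(\<Sum>B\<in>{B\<in>Pow A. B \<subseteq> A'}. h (card B)) = (\<Sum>B\<in>Pow A. if B \<subseteq> A' then h (card B) else 0)"
    by (rule sum.inter_filter) (use assms in simp)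
  moreover have "(\<Sum>B\<in>Pow A. h (card B) * of_bool (B \<subseteq> A')) = (\<Sum>B\<in>Pow A. if B \<subseteq> A' then h (card B) else 0)"
    by (rule sum.cong) auto
  ultimately have "(\<Sum>B\<in>Pow A. h (card B) * of_bool (B \<subseteq> A')) = (\<Sum>B\<in>{B\<in>Pow A. B \<subseteq> A'}. h (card B))"
    by simp
  also have "{B\<in>Pow A. B \<subseteq> A'} = Pow A'" using assms by auto
  finally show ?thesis using card_sum[OF fA'] by simp
qed

lemma sum_empty:
  fixes h :: "nat \<Rightarrow> real"
  assumes "finite A"
  shows "(\<Sum>B\<in>Pow A. h (card B) * of_bool (B = {})) = h 0"
proof -
  have "(\<Sum>B\<in>{B\<in>Pow A. B = {}}. h (card B)) = (\<Sum>B\<in>Pow A. if B = {} then h (card B) else 0)"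
    by (rule sum.inter_filter) (use assms in simp)
  moreover have "(\<Sum>B\<in>Pow A. h (card B) * of_bool (B = {})) = (\<Sum>B\<in>Pow A. if B = {} then h (card B) else 0)"
    by (rule sum.cong) auto
  ultimately have "(\<Sum>B\<in>Pow A. h (card B) * of_bool (B = {})) = (\<Sum>B\<in>{B\<in>Pow A. B = {}}. h (card B))"
    by simp
  also have "{B\<in>Pow A. B = {}} = {{}}" by auto
  finally show ?thesis by simp
qed

lemma cut_decomp:
  assumes "B \<subseteq> A"
  shows "(of_bool (ecut Q B) :: real) = 1 - of_bool (B \<subseteq> A - Q) - of_bool (B \<subseteq> A \<inter> Q) + of_bool (B = {})"
  using assms unfolding ecut_def by (cases "B = {}") auto

lemma sum_ecut:
  fixes h :: "nat \<Rightarrow> real"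
  assumes "finite A"
  shows "(\<Sum>B\<in>Pow A. h (card B) * of_bool (ecut Q B)) =
     (\<Sum>k\<le>card A. of_nat (card A choose k) * h k)
   - (\<Sum>k\<le>card (A - Q). of_nat (card (A - Q) choose k) * h k)
   - (\<Sum>k\<le>card (A \<inter> Q). of_nat (card (A \<inter> Q) choose k) * h k) + h 0"
proof -
  have "(\<Sum>B\<in>Pow A. h (card B) * of_bool (ecut Q B)) =
     (\<Sum>B\<in>Pow A. h (card B) - h (card B) * of_bool (B \<subseteq> A - Q)
        - h (card B) * of_bool (B \<subseteq> A \<inter> Q) + h (card B) * of_bool (B = {}))"
    by (rule sum.cong[OF refl]) (simp add: cut_decomp algebra_simps)
  also have "\<dots> = (\<Sum>B\<in>Pow A. h (card B)) - (\<Sum>B\<in>Pow A. h (card B) * of_bool (B \<subseteq> A - Q))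
     - (\<Sum>B\<in>Pow A. h (card B) * of_bool (B \<subseteq> A \<inter> Q)) + (\<Sum>B\<in>Pow A. h (card B) * of_bool (B = {}))"
    by (simp add: sum.distrib sum_subtractf)
  finally show ?thesis
    using card_sum[OF assms, of h] sum_sub[OF assms, of "A - Q" h] sum_sub[OF assms, of "A \<inter> Q" h]
      sum_empty[OF assms, of h] by auto
qed

lemma alt_sum: "(\<Sum>k\<le>m. of_nat (m choose k) * (-1::real) ^ k) = (if m = 0 then 1 else 0)"
  using choose_alternating_sum[of m, where 'a=real] by (auto simp: mult.commute)

lemma ecut_card:
  assumes "finite A"
  shows "ecut Q A \<longleftrightarrow> card (A - Q) \<ge> 1 \<and> card (A \<inter> Q) \<ge> 1"
  using assms unfolding ecut_def by (auto simp: Suc_le_eq card_gt_0_iff)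

lemma C1:
  assumes "finite A"
  shows "(of_bool (ecut Q A) :: real) = (\<Sum>B\<in>Pow A. (-1) ^ card B * of_bool (ecut Q B))"
proof -
  have cA: "card A = card (A \<inter> Q) + card (A - Q)" using card_Int_Diff[OF assms] .
  show ?thesis
    unfolding sum_ecut[OF assms, of "\<lambda>k. (-1) ^ k"] alt_sum ecut_card[OF assms]
    using cA by auto
qed

lemma C2:
  assumes "finite A" "odd (card A)"
  shows "(of_bool (ecut Q A) :: real) =
    (\<Sum>B\<in>{B. B \<subset> A \<and> even (card B)}. cc (card A - card B) * of_bool (ecut Q B))"
proof -
  define n where "n = card A"
  define h where "h = (\<lambda>k. if even k then cc (n - k) else 0)"
  have cA: "n = card (A \<inter> Q) + card (A - Q)" using card_Int_Diff[OF assms(1)] n_def by simp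
  have set: "{B. B \<subset> A \<and> even (card B)} = {B\<in>Pow A. even (card B)}"
    using assms n_def by auto
  have "(\<Sum>B\<in>{B. B \<subset> A \<and> even (card B)}. cc (card A - card B) * of_bool (ecut Q B))
      = (\<Sum>B\<in>Pow A. h (card B) * of_bool (ecut Q B))"
  proof -
    have "(\<Sum>B\<in>{B\<in>Pow A. even (card B)}. cc (card A - card B) * of_bool (ecut Q B))
       = (\<Sum>B\<in>Pow A. if even (card B) then cc (card A - card B) * of_bool (ecut Q B) else 0)"
      by (rule sum.inter_filter) (use assms in simp)
    also have "\<dots> = (\<Sum>B\<in>Pow A. h (card B) * of_bool (ecut Q B))"
      by (rule sum.cong) (auto simp: h_def n_def)
    finally show ?thesis unfolding set .
  qed
  also have "\<dots> = (\<Sum>k\<le>n. of_nat (n choose k) * h k)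
   - (\<Sum>k\<le>card (A - Q). of_nat (card (A - Q) choose k) * h k)
   - (\<Sum>k\<le>card (A \<inter> Q). of_nat (card (A \<inter> Q) choose k) * h k) + h 0"
    unfolding sum_ecut[OF assms(1)] n_def ..
  also have "\<dots> = of_bool (ecut Q A)"
  proof -
    have T: "\<And>m. (\<Sum>k\<le>m. of_nat (m choose k) * h k) = (\<Sum>k\<le>m. of_nat (m choose k) * (if even k then 1 else 0) * cc (n - k))"
      unfolding h_def by (intro sum.cong) auto
    have n1: "n \<ge> 1" using assms n_def by (cases n) auto
    have I1: "(\<Sum>k\<le>n. of_nat (n choose k) * h k) + cc n = 1"
      using stepI1[OF n1] assms n_def unfolding T by simp
    have h0: "h 0 = cc n" by (simp add: h_def)
    show ?thesis
    proof (cases "card (A - Q) \<ge> 1 \<and> card (A \<inter> Q) \<ge> 1")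
      case True
      have "(\<Sum>k\<le>card (A - Q). of_nat (card (A - Q) choose k) * h k)
          + (\<Sum>k\<le>card (A \<inter> Q). of_nat (card (A \<inter> Q) choose k) * h k) = 0"
        using stepB[of "card (A - Q)" "card (A \<inter> Q)"] True cA unfolding T by (simp add: add.commute)
      moreover have "ecut Q A" using True ecut_card[OF assms(1)] by blast
      ultimately show ?thesis using I1 h0 by simp
    next
      case False
      then have nc: "\<not> ecut Q A" using ecut_card[OF assms(1)] by blast
      have z: "(\<Sum>k\<le>0. of_nat (0 choose k) * h k) = h 0" by simp
      from False consider "card (A - Q) = 0" | "card (A \<inter> Q) = 0" by linarith
      then show ?thesis
      proof cases
        case 1
        then have "card (A \<inter> Q) = n" using cA by linarith
        then show ?thesis using nc z 1 by simp
      next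
        case 2
        then have "card (A - Q) = n" using cA by linarith
        then show ?thesis using nc z 2 by simp
      qed
    qed
  qed
  finally show ?thesis by simp
qed



lemma reach_sym: "reach F u v \<Longrightarrow> reach F v u"
proof -
  have "symp (\<lambda>u v. {u, v} \<in> F)" by (auto simp: symp_def insert_commute)
  then have "symp (reach F)" unfolding reach_def by (rule symp_rtranclp)
  then show "reach F u v \<Longrightarrow> reach F v u" by (auto dest: sympD)
qed

lemma reach_trans: "reach F u v \<Longrightarrow> reach F v z \<Longrightarrow> reach F u z"
  unfolding reach_def by (rule rtranclp_trans)

lemma reach_refl: "reach F u u"
  unfolding reach_def by simp

lemma reach_mono: "F \<subseteq> G \<Longrightarrow> reach F u v \<Longrightarrow> reach G u v"
  unfolding reach_def by (erule rtranclp_mono[THEN predicate2D, rotated]) auto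

lemma reach_split:
  assumes "reach E u z" "e = {u, v}"
  shows "reach (E - {e}) u z \<or> reach (E - {e}) v z"
  using assms(1) unfolding reach_def
proof (induction rule: rtranclp_induct)
  case base then show ?case by simp
next
  case (step y z)
  show ?case
  proof (cases "{y, z} = e")
    case True
    then have "z = u \<or> z = v" using assms(2) by (auto simp: doubleton_eq_iff)
    then show ?thesis by auto
  next
    case False
    then have "{y, z} \<in> E - {e}" using step by auto
    with step.IH show ?thesis
      by (meson rtranclp.rtrancl_into_rtrancl)
  qed
qed

lemma edge_cut:
  assumes conn: "\<forall>a\<in>V. \<forall>b\<in>V. reach E a b" and e: "e \<in> E" "e = {u, v}" "u \<in> V"
    and S: "S \<subseteq> V"
  shows "e \<in> span_edges E S \<longleftrightarrow> (\<exists>a\<in>S. reach (E - {e}) u a) \<and> (\<exists>b\<in>S. \<not> reach (E - {e}) u b)"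
proof
  assume "(\<exists>a\<in>S. reach (E - {e}) u a) \<and> (\<exists>b\<in>S. \<not> reach (E - {e}) u b)"
  then obtain a b where a: "a \<in> S" "reach (E - {e}) u a" and b: "b \<in> S" "\<not> reach (E - {e}) u b" by blast
  show "e \<in> span_edges E S"
    unfolding span_edges_def
  proof (rule InterI)
    fix F assume "F \<in> {F. F \<subseteq> E \<and> (\<forall>a\<in>S. \<forall>b\<in>S. reach F a b)}"
    then have F: "F \<subseteq> E" "reach F a b" using a b by auto
    show "e \<in> F"
    proof (rule ccontr)
      assume "e \<notin> F"
      then have "F \<subseteq> E - {e}" using F by auto
      then have "reach (E - {e}) a b" using F(2) reach_mono by metis
      then have "reach (E - {e}) u b" using a(2) reach_trans by metis
      then show False using b(2) by contradiction
    qed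
  qed
next
  assume sp: "e \<in> span_edges E S"
  show "(\<exists>a\<in>S. reach (E - {e}) u a) \<and> (\<exists>b\<in>S. \<not> reach (E - {e}) u b)"
  proof (rule ccontr)
    assume "\<not> ?thesis"
    then consider "\<forall>a\<in>S. reach (E - {e}) u a" | "\<forall>a\<in>S. \<not> reach (E - {e}) u a" by blast
    then have "\<forall>a\<in>S. \<forall>b\<in>S. reach (E - {e}) a b"
    proof cases
      case 1
      show ?thesis
      proof (intro ballI)
        fix a b assume "a \<in> S" "b \<in> S"
        then have "reach (E - {e}) u a" "reach (E - {e}) u b" using 1 by blast+
        then have "reach (E - {e}) a u" "reach (E - {e}) u b" using reach_sym by auto
        then show "reach (E - {e}) a b" by (rule reach_trans)
      qed
    next
      case 2
      have "\<forall>a\<in>S. reach (E - {e}) v a"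
      proof
        fix a assume "a \<in> S"
        then have "reach E u a" using conn S e by auto
        then show "reach (E - {e}) v a" using reach_split[OF _ e(2)] 2 \<open>a \<in> S\<close> by blast
      qed
      show ?thesis
      proof (intro ballI)
        fix a b assume "a \<in> S" "b \<in> S"
        then have "reach (E - {e}) v a" "reach (E - {e}) v b" using \<open>\<forall>a\<in>S. reach (E - {e}) v a\<close> by blast+
        then have "reach (E - {e}) a v" "reach (E - {e}) v b" using reach_sym by auto
        then show "reach (E - {e}) a b" by (rule reach_trans)
      qed
    qed
    then have "E - {e} \<in> {F. F \<subseteq> E \<and> (\<forall>a\<in>S. \<forall>b\<in>S. reach F a b)}" by auto
    then have "span_edges E S \<subseteq> E - {e}" unfolding span_edges_def by blast
    then show False using sp by blast
  qed
qed

lemma span_sub: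
  assumes conn: "\<forall>a\<in>V. \<forall>b\<in>V. reach E a b" and S: "S \<subseteq> V"
  shows "span_edges E S \<subseteq> E"
proof -
  have "E \<in> {F. F \<subseteq> E \<and> (\<forall>a\<in>S. \<forall>b\<in>S. reach F a b)}" using conn S by auto
  then show ?thesis unfolding span_edges_def by blast
qed



lemma PD_edges:
  assumes conn: "\<forall>a\<in>V. \<forall>b\<in>V. reach E a b" and fin: "finite E"
    and edges: "\<forall>e\<in>E. \<exists>u v. e = {u, v} \<and> u \<noteq> v \<and> u \<in> V \<and> v \<in> V"
    and B: "phi ` B \<subseteq> V"
  shows "PD E w phi B = (\<Sum>e\<in>E. w e * of_bool (ecut {x. reach (E - {e}) (SOME u. \<exists>v. e = {u, v} \<and> u \<in> V \<and> v \<in> V) (phi x)} B))"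
proof -
  have "PD E w phi B = (\<Sum>e\<in>{e\<in>E. e \<in> span_edges E (phi ` B)}. w e)"
    unfolding PD_def using span_sub[OF conn B] by (intro sum.cong) auto
  also have "\<dots> = (\<Sum>e\<in>E. if e \<in> span_edges E (phi ` B) then w e else 0)"
    by (rule sum.inter_filter[OF fin])
  also have "\<dots> = (\<Sum>e\<in>E. w e * of_bool (ecut {x. reach (E - {e}) (SOME u. \<exists>v. e = {u, v} \<and> u \<in> V \<and> v \<in> V) (phi x)} B))"
  proof (rule sum.cong[OF refl])
    fix e assume eE: "e \<in> E"
    define u where "u = (SOME u. \<exists>v. e = {u, v} \<and> u \<in> V \<and> v \<in> V)"
    have "\<exists>u v. e = {u, v} \<and> u \<in> V \<and> v \<in> V" using edges eE by blast
    then have "\<exists>v. e = {u, v} \<and> u \<in> V \<and> v \<in> V" unfolding u_def by (rule someI_ex)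
    then obtain v where uv: "e = {u, v}" "u \<in> V" by blast
    have "e \<in> span_edges E (phi ` B) \<longleftrightarrow> ecut {x. reach (E - {e}) u (phi x)} B"
      unfolding edge_cut[OF conn eE uv(1) uv(2) B] ecut_def by auto
    then show "(if e \<in> span_edges E (phi ` B) then w e else 0) =
       w e * of_bool (ecut {x. reach (E - {e}) (SOME u. \<exists>v. e = {u, v} \<and> u \<in> V \<and> v \<in> V) (phi x)} B)"
      unfolding u_def by simp
  qed
  finally show ?thesis .
qed

theorem theorem3:
  fixes V :: "'v set" and E :: "'v set set" and w :: "'v set \<Rightarrow> real"
    and X :: "'x set" and phi :: "'x \<Rightarrow> 'v"
  assumes tree: "is_tree V E"
    and labels: "bij_betw phi X (leaves V E)"
    and nonneg: "\<forall>e\<in>E. w e \<ge> 0"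
  shows "(\<forall>A. A \<subseteq> X \<longrightarrow>
            PD E w phi A = (\<Sum>B\<in>Pow A. (-1) ^ card B * PD E w phi B))
       \<and> (\<forall>A. A \<subseteq> X \<longrightarrow> odd (card A) \<longrightarrow>
            PD E w phi A =
              (\<Sum>B\<in>{B. B \<subset> A \<and> even (card B)}.
                 tangent_number (card A - card B) / 2 ^ (card A - card B) * PD E w phi B))"
proof -
  have finV: "finite V" and edges: "\<forall>e\<in>E. \<exists>u v. e = {u, v} \<and> u \<noteq> v \<and> u \<in> V \<and> v \<in> V"
    and conn: "\<forall>a\<in>V. \<forall>b\<in>V. reach E a b"
    using tree unfolding is_tree_def by auto
  have "E \<subseteq> Pow V" using edges by auto
  then have finE: "finite E" using finV by (meson finite_Pow_iff finite_subset)
  have finL: "finite (leaves V E)" using finV unfolding leaves_def by simp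
  have finX: "finite X" using bij_betw_finite[OF labels] finL by simp
  have phiV: "phi ` X \<subseteq> V" using labels unfolding bij_betw_def leaves_def by auto
  define Q where "Q = (\<lambda>e. {x. reach (E - {e}) (SOME u. \<exists>v. e = {u, v} \<and> u \<in> V \<and> v \<in> V) (phi x)})"
  have PDe: "\<And>B. B \<subseteq> X \<Longrightarrow> PD E w phi B = (\<Sum>e\<in>E. w e * of_bool (ecut (Q e) B))"
    unfolding Q_def using phiV by (intro PD_edges[OF conn finE edges]) auto
  have P1: "PD E w phi A = (\<Sum>B\<in>Pow A. (-1) ^ card B * PD E w phi B)" if A: "A \<subseteq> X" for A
  proof -
    have fA: "finite A" using A finX finite_subset by blast
    have "PD E w phi A = (\<Sum>e\<in>E. w e * (\<Sum>B\<in>Pow A. (-1) ^ card B * of_bool (ecut (Q e) B)))"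
      unfolding PDe[OF A] C1[OF fA] ..
    also have "\<dots> = (\<Sum>B\<in>Pow A. \<Sum>e\<in>E. (-1) ^ card B * (w e * of_bool (ecut (Q e) B)))"
      by (subst sum.swap) (simp add: sum_distrib_left mult.left_commute)
    also have "\<dots> = (\<Sum>B\<in>Pow A. (-1) ^ card B * PD E w phi B)"
    proof (rule sum.cong[OF refl])
      fix B assume "B \<in> Pow A"
      then have "B \<subseteq> X" using A by auto
      then show "(\<Sum>e\<in>E. (-1) ^ card B * (w e * of_bool (ecut (Q e) B))) = (-1) ^ card B * PD E w phi B"
        by (simp add: PDe[OF \<open>B \<subseteq> X\<close>] sum_distrib_left)
    qed
    finally show ?thesis .
  qed
  have P2: "PD E w phi A = (\<Sum>B\<in>{B. B \<subset> A \<and> even (card B)}.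
                 tangent_number (card A - card B) / 2 ^ (card A - card B) * PD E w phi B)"
    if A: "A \<subseteq> X" and odd: "odd (card A)" for A
  proof -
    have fA: "finite A" using A finX finite_subset by blast
    have "PD E w phi A = (\<Sum>e\<in>E. w e * (\<Sum>B\<in>{B. B \<subset> A \<and> even (card B)}. cc (card A - card B) * of_bool (ecut (Q e) B)))"
      unfolding PDe[OF A] C2[OF fA odd] ..
    also have "\<dots> = (\<Sum>B\<in>{B. B \<subset> A \<and> even (card B)}. \<Sum>e\<in>E. cc (card A - card B) * (w e * of_bool (ecut (Q e) B)))"
      by (subst sum.swap) (simp add: sum_distrib_left mult.left_commute)
    also have "\<dots> = (\<Sum>B\<in>{B. B \<subset> A \<and> even (card B)}.
                 tangent_number (card A - card B) / 2 ^ (card A - card B) * PD E w phi B)"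
    proof (rule sum.cong[OF refl])
      fix B assume "B \<in> {B. B \<subset> A \<and> even (card B)}"
      then have "B \<subseteq> X" using A by auto
      then show "(\<Sum>e\<in>E. cc (card A - card B) * (w e * of_bool (ecut (Q e) B))) =
          tangent_number (card A - card B) / 2 ^ (card A - card B) * PD E w phi B"
        by (simp add: PDe[OF \<open>B \<subseteq> X\<close>] cc_tangent sum_distrib_left)
    qed
    finally show ?thesis .
  qed
  show ?thesis using P1 P2 by blast
qed

end
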